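(* Let $P$ be a polyhedral map of genus $g\neq1$ and let $O=\mathrm{GC}(l,0)$ be a Goldberg-Coxeter operation with $l$ a positive integer that is not a multiple of 3. Then $O$ does not increase the symmetry of $P$, i.e. $|\mathrm{Aut}(O(P))|=|\mathrm{Aut}(P)|$.
   Context: A polyhedral map is a 3-connected graph embedded in a closed orientable surface such that every face is an open disc and the closures of any two faces have connected intersection; its genus is that of the surface; $\mathrm{Aut}(P)$ is its automorphism group. Barycentric subdivision $B_P$: add a vertex in every face and on every edge, join each face-vertex to the vertices and edge-vertices on its boundary; colour original vertices 0, edge-vertices 1, face-vertices 2; the triangles are chambers. Goldberg-Coxeter operations: let $T_H$ be the regular hexagonal tiling of the plane with coordinates where $(0,0)$ is the centre of a face $f$, $(0,1)$ is a vertex of $f$ and $(1,0)$ is the vertex of $f$ preceding $(0,1)$ clockwise on its boundary (integer point $(x,y)$ is a face centre iff $x-y\equiv0\pmod3$, a vertex otherwise). For $l\ge1$ and $m\in\{0,l\}$, $\mathrm{GC}(l,m)$ is the coloured triangle cut out of $B_{T_H}$ with corners $v_0=(l,m)$, $v_1=(\frac{l-m}{2},\frac{l+2m}{2})$, $v_2=(0,0)$. It is applied to $P$ by gluing into every chamber of $B_P$ a copy of it or its mirror image (adjacent chambers receiving mirror images), identifying $v_i$ with the colour-$i$ vertex of the chamber and the boundary path between $v_i$ and $v_j$ with the chamber edge between its colour-$i$ and colour-$j$ vertices; the result is the barycentric subdivision of a map $\mathrm{GC}(l,m)(P)$. Each automorphism of $P$ induces one of $\mathrm{GC}(l,m)(P)$,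 so $|\mathrm{Aut}(P)|\le|\mathrm{Aut}(\mathrm{GC}(l,m)(P))|$; the operation increases the symmetry of $P$ if this inequality is strict. *)

theory Defs
  imports Main
begin

text \<open>A map is given by its set of flags (chambers of the barycentric subdivision)
  together with the involutions rf i (i = 0,1,2), where rf i x is the chamber sharing
  with x the side opposite its colour-i vertex.\<close>

record 'a flagmap =
  flags :: "'a set"
  rf :: "nat \<Rightarrow> 'a \<Rightarrow> 'a"

definition step_rel :: "'a flagmap \<Rightarrow> nat set \<Rightarrow> 'a \<Rightarrow> 'a \<Rightarrow> bool" where
  "step_rel M I a b \<longleftrightarrow> (\<exists>i\<in>I. b = rf M i a)"

definition orb :: "'a flagmap \<Rightarrow> nat set \<Rightarrow> 'a \<Rightarrow> 'a set" where
  "orb M I x = {y. (step_rel M I)\<^sup>*\<^sup>* x y}"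

definition is_map :: "'a flagmap \<Rightarrow> bool" where
  "is_map M \<longleftrightarrow> finite (flags M) \<and> flags M \<noteq> {} \<and>
     (\<forall>i<3. \<forall>x\<in>flags M. rf M i x \<in> flags M \<and> rf M i (rf M i x) = x \<and> rf M i x \<noteq> x) \<and>
     (\<forall>x\<in>flags M. rf M 0 (rf M 2 x) = rf M 2 (rf M 0 x) \<and> rf M 0 (rf M 2 x) \<noteq> x) \<and>
     (\<forall>x\<in>flags M. \<forall>y\<in>flags M. (step_rel M {0,1,2})\<^sup>*\<^sup>* x y)"

definition orientable :: "'a flagmap \<Rightarrow> bool" where
  "orientable M \<longleftrightarrow> (\<exists>s :: 'a \<Rightarrow> bool. \<forall>x\<in>flags M. \<forall>i<3. s (rf M i x) \<noteq> s x)"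

definition verts :: "'a flagmap \<Rightarrow> 'a set set" where
  "verts M = orb M {1,2} ` flags M"

definition edges :: "'a flagmap \<Rightarrow> 'a set set" where
  "edges M = orb M {0,2} ` flags M"

definition faces :: "'a flagmap \<Rightarrow> 'a set set" where
  "faces M = orb M {0,1} ` flags M"

definition euler_char :: "'a flagmap \<Rightarrow> int" where
  "euler_char M = int (card (verts M)) - int (card (edges M)) + int (card (faces M))"

definition genus :: "'a flagmap \<Rightarrow> int" where
  "genus M = (2 - euler_char M) div 2"

definition endpts :: "'a flagmap \<Rightarrow> 'a set \<Rightarrow> 'a set set" where
  "endpts M e = orb M {1,2} ` e"

definition connected_sub :: "'a flagmap \<Rightarrow> 'a set set \<Rightarrow> 'a set set \<Rightarrow> bool" where
  "connected_sub M Vs Es \<longleftrightarrow>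
     (\<forall>u\<in>Vs. \<forall>w\<in>Vs. (\<lambda>a b. \<exists>e\<in>Es. endpts M e = {a, b})\<^sup>*\<^sup>* u w)"

definition three_connected :: "'a flagmap \<Rightarrow> bool" where
  "three_connected M \<longleftrightarrow>
     card (verts M) \<ge> 4 \<and>
     (\<forall>e\<in>edges M. card (endpts M e) = 2) \<and>
     inj_on (endpts M) (edges M) \<and>
     (\<forall>S \<subseteq> verts M. card S \<le> 2 \<longrightarrow>
        connected_sub M (verts M - S) {e\<in>edges M. endpts M e \<inter> S = {}})"

text \<open>Closures of any two faces have connected intersection (the intersection of the
  closures consists of the common vertices and common edges).\<close>
definition faces_meet_well :: "'a flagmap \<Rightarrow> bool" where
  "faces_meet_well M \<longleftrightarrow>
     (\<forall>f1\<in>faces M. \<forall>f2\<in>faces M. f1 \<noteq> f2 \<longrightarrow>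
        connected_sub M {v\<in>verts M. v \<inter> f1 \<noteq> {} \<and> v \<inter> f2 \<noteq> {}}
                        {e\<in>edges M. e \<inter> f1 \<noteq> {} \<and> e \<inter> f2 \<noteq> {}})"

definition polyhedral :: "'a flagmap \<Rightarrow> bool" where
  "polyhedral M \<longleftrightarrow> is_map M \<and> orientable M \<and> three_connected M \<and> faces_meet_well M"

definition Aut :: "'a flagmap \<Rightarrow> ('a \<Rightarrow> 'a) set" where
  "Aut M = {\<phi>. bij_betw \<phi> (flags M) (flags M) \<and>
              (\<forall>i<3. \<forall>x\<in>flags M. \<phi> (rf M i x) = rf M i (\<phi> x)) \<and>
              (\<forall>x. x \<notin> flags M \<longrightarrow> \<phi> x = x)}"

text \<open>Integer point (x,y) is a face centre iff x - y = 0 mod 3, otherwise a vertex;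
  the lattice neighbours are +-(1,0), +-(0,1), +-(1,-1).
  A chamber is a triple (F,V,W): F a face centre, V a vertex of F, and W the other end
  of the edge VW of F; its corners are V (colour 0), (V+W)/2 (colour 1), F (colour 2).\<close>

type_synonym pt = "int \<times> int"
type_synonym chamber = "pt \<times> pt \<times> pt"

definition padd :: "pt \<Rightarrow> pt \<Rightarrow> pt" where
  "padd p q = (fst p + fst q, snd p + snd q)"
definition psub :: "pt \<Rightarrow> pt \<Rightarrow> pt" where
  "psub p q = (fst p - fst q, snd p - snd q)"

definition hexface :: "pt \<Rightarrow> bool" where
  "hexface p \<longleftrightarrow> (fst p - snd p) mod 3 = 0"

definition hunit :: "pt \<Rightarrow> bool" where
  "hunit u \<longleftrightarrow> u \<in> {(1,0), (-1,0), (0,1), (0,-1), (1,-1), (-1,1)}"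

definition is_chamber :: "chamber \<Rightarrow> bool" where
  "is_chamber c = (case c of (F, V, W) \<Rightarrow>
      hexface F \<and> hunit (psub V F) \<and> hunit (psub W F) \<and> hunit (psub V W))"

text \<open>Corner of colour i, in doubled coordinates.\<close>
definition corner :: "chamber \<Rightarrow> nat \<Rightarrow> pt" where
  "corner c i = (case c of (F, V, W) \<Rightarrow>
      if i = 0 then padd V V else if i = 1 then padd V W else padd F F)"

definition cref :: "nat \<Rightarrow> chamber \<Rightarrow> chamber" where
  "cref i c = (case c of (F, V, W) \<Rightarrow>
      if i = 0 then (F, W, V)
      else if i = 1 then (F, V, padd (psub V W) F)
      else (psub (padd V W) F, V, W))"

text \<open>Corners of the triangle GC(l,m), in doubled coordinates:
  v0 = (l,m), v1 = ((l-m)/2, (l+2m)/2), v2 = (0,0).\<close>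
definition gc_vtx :: "nat \<Rightarrow> nat \<Rightarrow> nat \<Rightarrow> pt" where
  "gc_vtx l m j = (if j = 0 then (2 * int l, 2 * int m)
                   else if j = 1 then (int l - int m, int l + 2 * int m) else (0, 0))"

definition oth1 :: "nat \<Rightarrow> nat" where "oth1 j = (if j = 0 then 1 else 0)"
definition oth2 :: "nat \<Rightarrow> nat" where "oth2 j = (if j = 2 then 1 else 2)"

definition cross :: "pt \<Rightarrow> pt \<Rightarrow> pt \<Rightarrow> int" where
  "cross a b c = (fst b - fst a) * (snd c - snd a) - (snd b - snd a) * (fst c - fst a)"

text \<open>p lies on the side of the triangle opposite v_j.\<close>
definition on_side :: "nat \<Rightarrow> nat \<Rightarrow> nat \<Rightarrow> pt \<Rightarrow> bool" where
  "on_side l m j p \<longleftrightarrow> cross (gc_vtx l m (oth1 j)) (gc_vtx l m (oth2 j)) p = 0"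

definition in_tri :: "nat \<Rightarrow> nat \<Rightarrow> pt \<Rightarrow> bool" where
  "in_tri l m p \<longleftrightarrow> (\<forall>j<3.
     cross (gc_vtx l m (oth1 j)) (gc_vtx l m (oth2 j)) p *
     cross (gc_vtx l m (oth1 j)) (gc_vtx l m (oth2 j)) (gc_vtx l m j) \<ge> 0)"

definition gc_tri :: "nat \<Rightarrow> nat \<Rightarrow> chamber set" where
  "gc_tri l m = {c. is_chamber c \<and> (\<forall>i<3. in_tri l m (corner c i))}"

text \<open>For a chamber c of the triangle whose side opposite its colour-i corner lies on the
  boundary: the index j of the side of the triangle (opposite v_j) containing it.\<close>
definition gc_side :: "nat \<Rightarrow> nat \<Rightarrow> chamber \<Rightarrow> nat \<Rightarrow> nat" where
  "gc_side l m c i =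
     (if on_side l m 0 (corner c (oth1 i)) \<and> on_side l m 0 (corner c (oth2 i)) then 0
      else if on_side l m 1 (corner c (oth1 i)) \<and> on_side l m 1 (corner c (oth2 i)) then 1
      else 2)"

text \<open>GC(l,m)(M): flags are pairs (chamber of M, chamber of the triangle); adjacent
  chambers of M carry mirror copies, so crossing the boundary side opposite v_j
  goes to the same local chamber in the chamber rf j of M.\<close>
definition GC :: "nat \<Rightarrow> nat \<Rightarrow> 'a flagmap \<Rightarrow> ('a \<times> chamber) flagmap" where
  "GC l m M = \<lparr> flags = flags M \<times> gc_tri l m,
     rf = (\<lambda>i (f, c). if cref i c \<in> gc_tri l m then (f, cref i c)
                      else (rf M (gc_side l m c i) f, c)) \<rparr>"

end

theory Submission
  imports Defs
begin

lemma all3: "(\<forall>j<(3::nat). P j) \<longleftrightarrow> P 0 \<and> P 1 \<and> P 2"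
  by (auto simp: less_Suc_eq numeral_3_eq_3 numeral_2_eq_2)

lemma pos_mult_iff: "(k::int) > 0 \<Longrightarrow> 0 \<le> a * k \<longleftrightarrow> 0 \<le> a"
  by (simp add: zero_le_mult_iff)

lemma in_tri0:
  assumes "l \<ge> 1"
  shows "in_tri l 0 p \<longleftrightarrow> 0 \<le> snd p \<and> snd p \<le> fst p \<and> fst p + snd p \<le> 2 * int l"
proof -
  obtain x y where p: "p = (x,y)" by (cases p)
  have lp: "int l > 0" using assms by simp
  have "in_tri l 0 (x,y) \<longleftrightarrow> 0 \<le> (x - y) * (2 * int l * int l * int l)
     \<and> 0 \<le> y * (4 * int l * int l * int l)
     \<and> 0 \<le> (2 * int l - x - y) * (2 * int l * int l * int l)"
    unfolding in_tri_def all3 oth1_def oth2_def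
    by (simp add: cross_def gc_vtx_def algebra_simps)
  also have "\<dots> \<longleftrightarrow> 0 \<le> y \<and> y \<le> x \<and> x + y \<le> 2 * int l"
    using lp by (auto simp: pos_mult_iff)
  finally show ?thesis by (simp add: p)
qed

lemma on_side0:
  assumes "l \<ge> 1"
  shows "on_side l 0 0 p \<longleftrightarrow> fst p = snd p"
    and "on_side l 0 1 p \<longleftrightarrow> snd p = 0"
    and "on_side l 0 2 p \<longleftrightarrow> fst p + snd p = 2 * int l"
proof -
  obtain x y where p: "p = (x,y)" by (cases p)
  have lp: "int l \<noteq> 0" using assms by simp
  have "on_side l 0 0 (x,y) \<longleftrightarrow> int l * (x - y) = 0"
    by (simp add: on_side_def oth1_def oth2_def cross_def gc_vtx_def algebra_simps)
  then show "on_side l 0 0 p \<longleftrightarrow> fst p = snd p" using lp by (simp add: p)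
  have "on_side l 0 1 (x,y) \<longleftrightarrow> int l * y = 0"
    by (simp add: on_side_def oth1_def oth2_def cross_def gc_vtx_def algebra_simps)
  then show "on_side l 0 1 p \<longleftrightarrow> snd p = 0" using lp by (simp add: p)
  have "on_side l 0 2 (x,y) \<longleftrightarrow> int l * (2 * int l - x - y) = 0"
    by (simp add: on_side_def oth1_def oth2_def cross_def gc_vtx_def algebra_simps)
  then show "on_side l 0 2 p \<longleftrightarrow> fst p + snd p = 2 * int l" using lp by (auto simp: p)
qed

lemma hunit_sub:
  assumes "hunit (v1 - a, v2 - (b::int))"
  shows "(v1 = a+1 \<and> v2 = b-1) \<or> (v1 = a+1 \<and> v2 = b) \<or> (v1 = a \<and> v2 = b+1) \<or>
         (v1 = a-1 \<and> v2 = b+1) \<or> (v1 = a-1 \<and> v2 = b) \<or> (v1 = a \<and> v2 = b-1)"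
proof -
  have "(v1 - a = 1 \<and> v2 - b = 0) \<or> (v1 - a = -1 \<and> v2 - b = 0) \<or> (v1 - a = 0 \<and> v2 - b = 1) \<or>
        (v1 - a = 0 \<and> v2 - b = -1) \<or> (v1 - a = 1 \<and> v2 - b = -1) \<or> (v1 - a = -1 \<and> v2 - b = 1)"
    using assms unfolding hunit_def by simp
  then show ?thesis by (elim disjE conjE; simp add: eq_diff_eq)
qed

lemma chamber_cases:
  assumes "is_chamber c"
  obtains (s01) a b where "(a - b) mod 3 = 0" "c = ((a,b),(a+1,b-1),(a+1,b))" | (s05) a b where "(a - b) mod 3 = 0" "c = ((a,b),(a+1,b-1),(a,b-1))" | (s12) a b where "(a - b) mod 3 = 0" "c = ((a,b),(a+1,b),(a,b+1))" | (s10) a b where "(a - b) mod 3 = 0" "c = ((a,b),(a+1,b),(a+1,b-1))" | (s23) a b where "(a - b) mod 3 = 0" "c = ((a,b),(a,b+1),(a-1,b+1))" | (s21) a b where "(a - b) mod 3 = 0" "c = ((a,b),(a,b+1),(a+1,b))" | (s34) a b where "(a - b) mod 3 = 0" "c = ((a,b),(a-1,b+1),(a-1,b))" | (s32) a b where "(a - b) mod 3 = 0" "c = ((a,b),(a-1,b+1),(a,b+1))" | (s45) a b where "(a - b) mod 3 = 0" "c = ((a,b),(a-1,b),(a,b-1))" | (s43) a b where "(a - b) mod 3 = 0" "c = ((a,b),(a-1,b),(a-1,b+1))" | (s50) a b where "(a - b) mod 3 = 0" "c = ((a,b),(a,b-1),(a+1,b-1))" | (s54) a b where "(a - b) mod 3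 = 0" "c = ((a,b),(a,b-1),(a-1,b))"
proof -
  obtain a b V W where c: "c = ((a,b),V,W)" by (metis prod.exhaust)
  obtain v1 v2 where V: "V = (v1,v2)" by (cases V)
  obtain w1 w2 where W: "W = (w1,w2)" by (cases W)
  have h: "(a - b) mod 3 = 0" using assms c by (simp add: is_chamber_def hexface_def)
  have u: "hunit (v1 - a, v2 - b)" "hunit (w1 - a, w2 - b)" "hunit (v1 - w1, v2 - w2)"
    using assms c V W by (simp_all add: is_chamber_def psub_def)
  from hunit_sub[OF u(1)] hunit_sub[OF u(2)] u(3)
  have "c = ((a,b),(a+1,b-1),(a+1,b)) \<or> c = ((a,b),(a+1,b-1),(a,b-1)) \<or> c = ((a,b),(a+1,b),(a,b+1)) \<or>
        c = ((a,b),(a+1,b),(a+1,b-1)) \<or> c = ((a,b),(a,b+1),(a-1,b+1)) \<or> c = ((a,b),(a,b+1),(a+1,b)) \<or>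
        c = ((a,b),(a-1,b+1),(a-1,b)) \<or> c = ((a,b),(a-1,b+1),(a,b+1)) \<or> c = ((a,b),(a-1,b),(a,b-1)) \<or>
        c = ((a,b),(a-1,b),(a-1,b+1)) \<or> c = ((a,b),(a,b-1),(a+1,b-1)) \<or> c = ((a,b),(a,b-1),(a-1,b))"
    unfolding c V W
    by (elim disjE conjE; simp only: hunit_def; simp)
  then show ?thesis
    apply (elim disjE)
    apply (rule that(1)[OF h], assumption)
    apply (rule that(2)[OF h], assumption)
    apply (rule that(3)[OF h], assumption)
    apply (rule that(4)[OF h], assumption)
    apply (rule that(5)[OF h], assumption)
    apply (rule that(6)[OF h], assumption)
    apply (rule that(7)[OF h], assumption)
    apply (rule that(8)[OF h], assumption)
    apply (rule that(9)[OF h], assumption)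
    apply (rule that(10)[OF h], assumption)
    apply (rule that(11)[OF h], assumption)
    by (rule that(12)[OF h], assumption)
qed

lemma cref_inv: "cref i (cref i c) = c"
  by (cases c) (auto simp: cref_def padd_def psub_def)

lemma cref_chamber:
  assumes "is_chamber c" shows "is_chamber (cref i c)"
  using assms
proof (cases rule: chamber_cases)
qed (simp_all add: cref_def is_chamber_def padd_def psub_def hunit_def hexface_def; presburger)+

definition c0 :: "nat \<Rightarrow> chamber" where
  "c0 l = (if int l mod 3 = 1 then ((int l - 1, 0), (int l, 0), (int l - 1, 1))
           else ((int l - 1, 1), (int l, 0), (int l - 1, 0)))"
definition c2 :: chamber where "c2 = ((0,0),(1,0),(0,1))"

definition n2 :: "pt \<Rightarrow> int" where "n2 p = fst p * fst p + fst p * snd p + snd p * snd p"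
definition mu :: "chamber \<Rightarrow> int" where "mu c = n2 (corner c 0) + n2 (corner c 1) + n2 (corner c 2)"

definition vreg :: "'b flagmap \<Rightarrow> 'b \<Rightarrow> bool" where
  "vreg M x \<longleftrightarrow> rf M 1 (rf M 2 (rf M 1 (rf M 2 (rf M 1 (rf M 2 x))))) = x \<and> rf M 1 (rf M 2 x) \<noteq> x"
definition freg :: "'b flagmap \<Rightarrow> 'b \<Rightarrow> bool" where
  "freg M x \<longleftrightarrow> rf M 0 (rf M 1 (rf M 0 (rf M 1 (rf M 0 (rf M 1 (rf M 0 (rf M 1 (rf M 0 (rf M 1 (rf M 0 (rf M 1 x))))))))))) = x
     \<and> rf M 0 (rf M 1 (rf M 0 (rf M 1 x))) \<noteq> x \<and> rf M 0 (rf M 1 (rf M 0 (rf M 1 (rf M 0 (rf M 1 x))))) \<noteq> x"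



lemma GC_rf: "rf (GC l m M) i (f, c) = (if cref i c \<in> gc_tri l m then (f, cref i c) else (rf M (gc_side l m c i) f, c))"
  by (simp add: GC_def)
lemma G_flags: "flags (GC l m P) = flags P \<times> gc_tri l m" by (simp add: GC_def)
lemma side_lt3: "gc_side l m c i < 3" by (simp add: gc_side_def)

lemma map_inv: "is_map P \<Longrightarrow> x \<in> flags P \<Longrightarrow> i < 3 \<Longrightarrow> rf P i (rf P i x) = x"
  and map_cl: "is_map P \<Longrightarrow> x \<in> flags P \<Longrightarrow> i < 3 \<Longrightarrow> rf P i x \<in> flags P"
  unfolding is_map_def by auto

lemma G_cl: "is_map P \<Longrightarrow> x \<in> flags (GC l m P) \<Longrightarrow> i < 3 \<Longrightarrow> rf (GC l m P) i x \<in> flags (GC l m P)"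
  by (cases x) (auto simp: GC_rf G_flags map_cl side_lt3)

lemma aut_comm: "\<psi> \<in> Aut M \<Longrightarrow> x \<in> flags M \<Longrightarrow> i < 3 \<Longrightarrow> \<psi> (rf M i x) = rf M i (\<psi> x)"
  by (simp add: Aut_def)
lemma aut_in: "\<psi> \<in> Aut M \<Longrightarrow> x \<in> flags M \<Longrightarrow> \<psi> x \<in> flags M"
  by (auto simp: Aut_def bij_betw_def)
lemma aut_inj: "\<psi> \<in> Aut M \<Longrightarrow> x \<in> flags M \<Longrightarrow> y \<in> flags M \<Longrightarrow> \<psi> x = \<psi> y \<longleftrightarrow> x = y"
  by (auto simp: Aut_def bij_betw_def inj_on_def)

lemma reg_aut:
  assumes cl: "\<And>x i. x \<in> flags M \<Longrightarrow> i < 3 \<Longrightarrow> rf M i x \<in> flags M"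
    and a: "\<psi> \<in> Aut M" and x: "x \<in> flags M"
  shows "vreg M (\<psi> x) = vreg M x" "freg M (\<psi> x) = freg M x"
proof -
  have e: "\<And>y i. y \<in> flags M \<Longrightarrow> i < 3 \<Longrightarrow> rf M i (\<psi> y) = \<psi> (rf M i y)"
    using aut_comm[OF a] by simp
  have i: "\<And>y z. y \<in> flags M \<Longrightarrow> z \<in> flags M \<Longrightarrow> \<psi> y = \<psi> z \<longleftrightarrow> y = z"
    using aut_inj[OF a] by simp
  show "vreg M (\<psi> x) = vreg M x" unfolding vreg_def using x by (simp add: e i cl)
  show "freg M (\<psi> x) = freg M x" unfolding freg_def using x by (simp add: e i cl)
qed



lemma mem_T:
  assumes "l \<ge> 1"
  shows "((F,V,W) \<in> gc_tri l 0) \<longleftrightarrow> is_chamber (F,V,W) \<and>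
     0 \<le> snd V \<and> snd V \<le> fst V \<and> fst V + snd V \<le> int l \<and>
     0 \<le> snd V + snd W \<and> snd V + snd W \<le> fst V + fst W \<and> fst V + fst W + snd V + snd W \<le> 2 * int l \<and>
     0 \<le> snd F \<and> snd F \<le> fst F \<and> fst F + snd F \<le> int l"
  unfolding gc_tri_def all3 corner_def using assms
  by (auto simp: in_tri0 padd_def)

lemma on_side0S: "l \<ge> 1 \<Longrightarrow> on_side l 0 (Suc 0) p \<longleftrightarrow> snd p = 0"
  using on_side0(2) by simp

lemma l3: "\<not> 3 dvd l \<Longrightarrow> int l mod 3 = 1 \<or> int l mod 3 = 2"
  by presburger

lemma c2_T: "l \<ge> 1 \<Longrightarrow> c2 \<in> gc_tri l 0"
  by (simp add: c2_def mem_T is_chamber_def hexface_def hunit_def psub_def)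

lemma c2_r: "l \<ge> 1 \<Longrightarrow> cref 0 c2 \<notin> gc_tri l 0 \<and> gc_side l 0 c2 0 = 0 \<and> cref 1 c2 \<notin> gc_tri l 0 \<and> gc_side l 0 c2 1 = 1"
  by (simp add: c2_def mem_T cref_def padd_def psub_def gc_side_def corner_def on_side0 on_side0S oth1_def oth2_def)

lemma c0_T: "l \<ge> 1 \<Longrightarrow> \<not> 3 dvd l \<Longrightarrow> c0 l \<in> gc_tri l 0"
  using l3[of l]
  by (auto simp: c0_def mem_T is_chamber_def hexface_def hunit_def psub_def; presburger)

lemma c0_r: "l \<ge> 1 \<Longrightarrow> \<not> 3 dvd l \<Longrightarrow> cref 1 (c0 l) \<notin> gc_tri l 0 \<and> cref 2 (c0 l) \<notin> gc_tri l 0 \<and>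
   gc_side l 0 (c0 l) 1 = (if int l mod 3 = 1 then 1 else 2) \<and> gc_side l 0 (c0 l) 2 = (if int l mod 3 = 1 then 2 else 1)"
  using l3[of l]
  by (auto simp: c0_def mem_T cref_def padd_def psub_def gc_side_def corner_def on_side0 on_side0S oth1_def oth2_def)

lemma mu_nonneg: "mu c \<ge> 0"
proof -
  have "n2 p \<ge> 0" for p
  proof -
    have "2 * n2 p = fst p * fst p + snd p * snd p + (fst p + snd p) * (fst p + snd p)"
      by (simp add: n2_def algebra_simps)
    moreover have "fst p * fst p + snd p * snd p + (fst p + snd p) * (fst p + snd p) \<ge> 0" by simp
    ultimately show ?thesis by linarith
  qed
  then show ?thesis by (simp add: mu_def add_nonneg_nonneg)
qed

lemma desc:
  assumes l: "l \<ge> 1" and c: "c \<in> gc_tri l 0" and ne: "c \<noteq> c2"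
  shows "\<exists>i<3. cref i c \<in> gc_tri l 0 \<and> mu (cref i c) < mu c"
proof -
  have ch: "is_chamber c" using c by (simp add: gc_tri_def)
  have chi: "\<And>i. is_chamber (cref i c)" using cref_chamber[OF ch] .
  from ch show ?thesis
  proof (cases rule: chamber_cases)
    case (s01 a b)
    have "b \<le> a" using c l unfolding s01 by (simp add: mem_T)
    then have "a = b \<or> b + 3 \<le> a" using s01(1) by presburger
    then show ?thesis
    proof
      assume h: "a = b"
      have "cref 1 c \<in> gc_tri l 0 \<and> mu (cref 1 c) < mu c"
        using c ne chi[of 1] l h unfolding s01 by (simp add: mem_T c2_def cref_def padd_def psub_def mu_def n2_def corner_def algebra_simps)
      then show ?thesis by (intro exI[of _ 1]) simp
    next
      assume h: "b + 3 \<le> a"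
      have "cref 1 c \<in> gc_tri l 0 \<and> mu (cref 1 c) < mu c"
        using c ne chi[of 1] l h unfolding s01 by (simp add: mem_T c2_def cref_def padd_def psub_def mu_def n2_def corner_def algebra_simps)
      then show ?thesis by (intro exI[of _ 1]) simp
    qed
  next
    case (s05 a b)
    have "b \<le> a" using c l unfolding s05 by (simp add: mem_T)
    then have "a = b \<or> b + 3 \<le> a" using s05(1) by presburger
    then show ?thesis
    proof
      assume h: "a = b"
      have "cref 0 c \<in> gc_tri l 0 \<and> mu (cref 0 c) < mu c"
        using c ne chi[of 0] l h unfolding s05 by (simp add: mem_T c2_def cref_def padd_def psub_def mu_def n2_def corner_def algebra_simps)
      then show ?thesis by (intro exI[of _ 0]) simp
    next
      assume h: "b + 3 \<le> a"
      have "cref 0 c \<in> gc_tri l 0 \<and> mu (cref 0 c) < mu c"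
        using c ne chi[of 0] l h unfolding s05 by (simp add: mem_T c2_def cref_def padd_def psub_def mu_def n2_def corner_def algebra_simps)
      then show ?thesis by (intro exI[of _ 0]) simp
    qed
  next
    case (s12 a b)
    have "b \<le> a" using c l unfolding s12 by (simp add: mem_T)
    then have "a = b \<or> b + 3 \<le> a" using s12(1) by presburger
    then show ?thesis
    proof
      assume h: "a = b"
      have "cref 1 c \<in> gc_tri l 0 \<and> mu (cref 1 c) < mu c"
        using c ne chi[of 1] l h unfolding s12 by (simp add: mem_T c2_def cref_def padd_def psub_def mu_def n2_def corner_def algebra_simps)
      then show ?thesis by (intro exI[of _ 1]) simp
    next
      assume h: "b + 3 \<le> a"
      have "cref 0 c \<in> gc_tri l 0 \<and> mu (cref 0 c) < mu c"
        using c ne chi[of 0] l h unfolding s12 by (simp add: mem_T c2_def cref_def padd_def psub_def mu_def n2_def corner_def algebra_simps)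
      then show ?thesis by (intro exI[of _ 0]) simp
    qed
  next
    case (s10 a b)
    have "b \<le> a" using c l unfolding s10 by (simp add: mem_T)
    then have "a = b \<or> b + 3 \<le> a" using s10(1) by presburger
    then show ?thesis
    proof
      assume h: "a = b"
      have "cref 0 c \<in> gc_tri l 0 \<and> mu (cref 0 c) < mu c"
        using c ne chi[of 0] l h unfolding s10 by (simp add: mem_T c2_def cref_def padd_def psub_def mu_def n2_def corner_def algebra_simps)
      then show ?thesis by (intro exI[of _ 0]) simp
    next
      assume h: "b + 3 \<le> a"
      have "cref 0 c \<in> gc_tri l 0 \<and> mu (cref 0 c) < mu c"
        using c ne chi[of 0] l h unfolding s10 by (simp add: mem_T c2_def cref_def padd_def psub_def mu_def n2_def corner_def algebra_simps)
      then show ?thesis by (intro exI[of _ 0]) simp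
    qed
  next
    case (s23 a b)
    have "b \<le> a" using c l unfolding s23 by (simp add: mem_T)
    then have "a = b \<or> b + 3 \<le> a" using s23(1) by presburger
    then show ?thesis
    proof
      assume h: "a = b"
      have "cref 0 c \<in> gc_tri l 0 \<and> mu (cref 0 c) < mu c"
        using c ne chi[of 0] l h unfolding s23 by (simp add: mem_T c2_def cref_def padd_def psub_def mu_def n2_def corner_def algebra_simps)
      then show ?thesis by (intro exI[of _ 0]) simp
    next
      assume h: "b + 3 \<le> a"
      have "cref 0 c \<in> gc_tri l 0 \<and> mu (cref 0 c) < mu c"
        using c ne chi[of 0] l h unfolding s23 by (simp add: mem_T c2_def cref_def padd_def psub_def mu_def n2_def corner_def algebra_simps)
      then show ?thesis by (intro exI[of _ 0]) simp
    qed
  next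
    case (s21 a b)
    have "b \<le> a" using c l unfolding s21 by (simp add: mem_T)
    then have "a = b \<or> b + 3 \<le> a" using s21(1) by presburger
    then show ?thesis
    proof
      assume h: "a = b"
      have "cref 1 c \<in> gc_tri l 0 \<and> mu (cref 1 c) < mu c"
        using c ne chi[of 1] l h unfolding s21 by (simp add: mem_T c2_def cref_def padd_def psub_def mu_def n2_def corner_def algebra_simps)
      then show ?thesis by (intro exI[of _ 1]) simp
    next
      assume h: "b + 3 \<le> a"
      have "cref 1 c \<in> gc_tri l 0 \<and> mu (cref 1 c) < mu c"
        using c ne chi[of 1] l h unfolding s21 by (simp add: mem_T c2_def cref_def padd_def psub_def mu_def n2_def corner_def algebra_simps)
      then show ?thesis by (intro exI[of _ 1]) simp
    qed
  next
    case (s34 a b)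
    have "b \<le> a" using c l unfolding s34 by (simp add: mem_T)
    then have "a = b \<or> b + 3 \<le> a" using s34(1) by presburger
    then show ?thesis
    proof
      assume h: "a = b"
      have "cref 0 c \<in> gc_tri l 0 \<and> mu (cref 0 c) < mu c"
        using c ne chi[of 0] l h unfolding s34 by (simp add: mem_T c2_def cref_def padd_def psub_def mu_def n2_def corner_def algebra_simps)
      then show ?thesis by (intro exI[of _ 0]) simp
    next
      assume h: "b + 3 \<le> a"
      have "cref 0 c \<in> gc_tri l 0 \<and> mu (cref 0 c) < mu c"
        using c ne chi[of 0] l h unfolding s34 by (simp add: mem_T c2_def cref_def padd_def psub_def mu_def n2_def corner_def algebra_simps)
      then show ?thesis by (intro exI[of _ 0]) simp
    qed
  next
    case (s32 a b)
    have "b \<le> a" using c l unfolding s32 by (simp add: mem_T)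
    then have "a = b \<or> b + 3 \<le> a" using s32(1) by presburger
    then show ?thesis
    proof
      assume h: "a = b"
      have "cref 1 c \<in> gc_tri l 0 \<and> mu (cref 1 c) < mu c"
        using c ne chi[of 1] l h unfolding s32 by (simp add: mem_T c2_def cref_def padd_def psub_def mu_def n2_def corner_def algebra_simps)
      then show ?thesis by (intro exI[of _ 1]) simp
    next
      assume h: "b + 3 \<le> a"
      have "cref 1 c \<in> gc_tri l 0 \<and> mu (cref 1 c) < mu c"
        using c ne chi[of 1] l h unfolding s32 by (simp add: mem_T c2_def cref_def padd_def psub_def mu_def n2_def corner_def algebra_simps)
      then show ?thesis by (intro exI[of _ 1]) simp
    qed
  next
    case (s45 a b)
    have "b \<le> a" using c l unfolding s45 by (simp add: mem_T)
    then have "a = b \<or> b + 3 \<le> a" using s45(1) by presburger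
    then show ?thesis
    proof
      assume h: "a = b"
      have "cref 2 c \<in> gc_tri l 0 \<and> mu (cref 2 c) < mu c"
        using c ne chi[of 2] l h unfolding s45 by (simp add: mem_T c2_def cref_def padd_def psub_def mu_def n2_def corner_def algebra_simps)
      then show ?thesis by (intro exI[of _ 2]) simp
    next
      assume h: "b + 3 \<le> a"
      have "cref 2 c \<in> gc_tri l 0 \<and> mu (cref 2 c) < mu c"
        using c ne chi[of 2] l h unfolding s45 by (simp add: mem_T c2_def cref_def padd_def psub_def mu_def n2_def corner_def algebra_simps)
      then show ?thesis by (intro exI[of _ 2]) simp
    qed
  next
    case (s43 a b)
    have "b \<le> a" using c l unfolding s43 by (simp add: mem_T)
    then have "a = b \<or> b + 3 \<le> a" using s43(1) by presburger
    then show ?thesis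
    proof
      assume h: "a = b"
      have "cref 2 c \<in> gc_tri l 0 \<and> mu (cref 2 c) < mu c"
        using c ne chi[of 2] l h unfolding s43 by (simp add: mem_T c2_def cref_def padd_def psub_def mu_def n2_def corner_def algebra_simps)
      then show ?thesis by (intro exI[of _ 2]) simp
    next
      assume h: "b + 3 \<le> a"
      have "cref 2 c \<in> gc_tri l 0 \<and> mu (cref 2 c) < mu c"
        using c ne chi[of 2] l h unfolding s43 by (simp add: mem_T c2_def cref_def padd_def psub_def mu_def n2_def corner_def algebra_simps)
      then show ?thesis by (intro exI[of _ 2]) simp
    qed
  next
    case (s50 a b)
    have "b \<le> a" using c l unfolding s50 by (simp add: mem_T)
    then have "a = b \<or> b + 3 \<le> a" using s50(1) by presburger
    then show ?thesis
    proof
      assume h: "a = b"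
      have "cref 1 c \<in> gc_tri l 0 \<and> mu (cref 1 c) < mu c"
        using c ne chi[of 1] l h unfolding s50 by (simp add: mem_T c2_def cref_def padd_def psub_def mu_def n2_def corner_def algebra_simps)
      then show ?thesis by (intro exI[of _ 1]) simp
    next
      assume h: "b + 3 \<le> a"
      have "cref 1 c \<in> gc_tri l 0 \<and> mu (cref 1 c) < mu c"
        using c ne chi[of 1] l h unfolding s50 by (simp add: mem_T c2_def cref_def padd_def psub_def mu_def n2_def corner_def algebra_simps)
      then show ?thesis by (intro exI[of _ 1]) simp
    qed
  next
    case (s54 a b)
    have "b \<le> a" using c l unfolding s54 by (simp add: mem_T)
    then have "a = b \<or> b + 3 \<le> a" using s54(1) by presburger
    then show ?thesis
    proof
      assume h: "a = b"
      have "cref 2 c \<in> gc_tri l 0 \<and> mu (cref 2 c) < mu c"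
        using c ne chi[of 2] l h unfolding s54 by (simp add: mem_T c2_def cref_def padd_def psub_def mu_def n2_def corner_def algebra_simps)
      then show ?thesis by (intro exI[of _ 2]) simp
    next
      assume h: "b + 3 \<le> a"
      have "cref 2 c \<in> gc_tri l 0 \<and> mu (cref 2 c) < mu c"
        using c ne chi[of 2] l h unfolding s54 by (simp add: mem_T c2_def cref_def padd_def psub_def mu_def n2_def corner_def algebra_simps)
      then show ?thesis by (intro exI[of _ 2]) simp
    qed
  qed
qed

lemma map_c02: "is_map P \<Longrightarrow> x \<in> flags P \<Longrightarrow> rf P 2 (rf P 0 x) = rf P 0 (rf P 2 x)"
  and map_ne02: "is_map P \<Longrightarrow> x \<in> flags P \<Longrightarrow> rf P 0 (rf P 2 x) \<noteq> x"
  unfolding is_map_def by auto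

lemmas walk_simps = vreg_def freg_def GC_rf mem_T cref_def padd_def psub_def is_chamber_def hexface_def hunit_def
      gc_side_def corner_def on_side0 on_side0S oth1_def oth2_def map_inv map_cl map_c02 map_ne02

lemma V1a:
  assumes l: "l \<ge> 1" and m: "is_map P" and f: "f \<in> flags P" and k: "k \<ge> 0" and kl: "int l \<ge> 3*k+2"
    and c: "c \<in> gc_tri l 0" and v: "fst (snd c) = (3*k+1, 0)"
  shows "vreg (GC l 0 P) (f,c)"
proof -
  have ch: "is_chamber c" using c by (simp add: gc_tri_def)
  from ch show ?thesis
    apply (cases rule: chamber_cases)
    using c v l m f k kl
    apply (simp_all add: walk_simps)
    apply (presburger+)?
    done
qed

lemma V1b:
  assumes l: "l \<ge> 1" and m: "is_map P" and f: "f \<in> flags P" and k: "k \<ge> 0" and kl: "int l \<ge> 3*k+3"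
    and c: "c \<in> gc_tri l 0" and v: "fst (snd c) = (3*k+2, 0)"
  shows "vreg (GC l 0 P) (f,c)"
proof -
  have ch: "is_chamber c" using c by (simp add: gc_tri_def)
  from ch show ?thesis
    apply (cases rule: chamber_cases)
    using c v l m f k kl
    apply (simp_all add: walk_simps)
    apply (presburger+)?
    done
qed

lemma V2a:
  assumes l: "l \<ge> 1" and m: "is_map P" and f: "f \<in> flags P" and k: "k \<ge> 0 \<and> q \<ge> 1" and kl: "int l = 2*q+3*k+1"
    and c: "c \<in> gc_tri l 0" and v: "fst (snd c) = (q+3*k+1, q)"
  shows "vreg (GC l 0 P) (f,c)"
proof -
  have ch: "is_chamber c" using c by (simp add: gc_tri_def)
  from ch show ?thesis
    apply (cases rule: chamber_cases)
    using c v l m f k kl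
    apply (simp_all add: walk_simps)
    apply (presburger+)?
    done
qed

lemma V2b:
  assumes l: "l \<ge> 1" and m: "is_map P" and f: "f \<in> flags P" and k: "k \<ge> 0 \<and> q \<ge> 1" and kl: "int l = 2*q+3*k+2"
    and c: "c \<in> gc_tri l 0" and v: "fst (snd c) = (q+3*k+2, q)"
  shows "vreg (GC l 0 P) (f,c)"
proof -
  have ch: "is_chamber c" using c by (simp add: gc_tri_def)
  from ch show ?thesis
    apply (cases rule: chamber_cases)
    using c v l m f k kl
    apply (simp_all add: walk_simps)
    apply (presburger+)?
    done
qed

lemma F0:
  assumes l: "l \<ge> 1" and m: "is_map P" and f: "f \<in> flags P" and k: "t \<ge> 1" and kl: "int l \<ge> 2*t+1"
    and c: "c \<in> gc_tri l 0" and v: "fst c = (t, t)"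
  shows "freg (GC l 0 P) (f,c)"
proof -
  have ch: "is_chamber c" using c by (simp add: gc_tri_def)
  from ch show ?thesis
    apply (cases rule: chamber_cases)
    using c v l m f k kl
    apply (simp_all add: walk_simps)
    apply (presburger+)?
    done
qed

lemma F02:
  assumes l: "l \<ge> 1" and m: "is_map P" and f: "f \<in> flags P" and k: "t \<ge> 1" and kl: "int l = 2*t"
    and c: "c \<in> gc_tri l 0" and v: "fst c = (t, t)"
  shows "freg (GC l 0 P) (f,c)"
proof -
  have ch: "is_chamber c" using c by (simp add: gc_tri_def)
  from ch show ?thesis
    apply (cases rule: chamber_cases)
    using c v l m f k kl
    apply (simp_all add: walk_simps)
    apply (presburger+)?
    done
qed

lemma F1:
  assumes l: "l \<ge> 1" and m: "is_map P" and f: "f \<in> flags P" and k: "k \<ge> 0" and kl: "int l \<ge> 3*k+4"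
    and c: "c \<in> gc_tri l 0" and v: "fst c = (3*k+3, 0)"
  shows "freg (GC l 0 P) (f,c)"
proof -
  have ch: "is_chamber c" using c by (simp add: gc_tri_def)
  from ch show ?thesis
    apply (cases rule: chamber_cases)
    using c v l m f k kl
    apply (simp_all add: walk_simps)
    apply (presburger+)?
    done
qed

lemma F2:
  assumes l: "l \<ge> 1" and m: "is_map P" and f: "f \<in> flags P" and k: "k \<ge> 0 \<and> q \<ge> 1" and kl: "int l = 2*q+3*k+3"
    and c: "c \<in> gc_tri l 0" and v: "fst c = (q+3*k+3, q)"
  shows "freg (GC l 0 P) (f,c)"
proof -
  have ch: "is_chamber c" using c by (simp add: gc_tri_def)
  from ch show ?thesis
    apply (cases rule: chamber_cases)
    using c v l m f k kl
    apply (simp_all add: walk_simps)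
    apply (presburger+)?
    done
qed

lemma vint_T:
  assumes l: "l \<ge> 1" and ch: "is_chamber c" and v: "fst (snd c) = (x,y)"
    and h: "y \<ge> 1" "x - y \<ge> 1" "x + y \<le> int l - 1"
  shows "c \<in> gc_tri l 0"
  using ch
  apply (cases rule: chamber_cases)
  using l v h
  apply (simp_all add: mem_T is_chamber_def hexface_def hunit_def psub_def)
  apply (presburger+)?
  done

lemma fint_T:
  assumes l: "l \<ge> 1" and ch: "is_chamber c" and v: "fst c = (x,y)"
    and h: "y \<ge> 1" "x - y \<ge> 3" "x + y \<le> int l - 1"
  shows "c \<in> gc_tri l 0"
  using ch
  apply (cases rule: chamber_cases)
  using l v h
  apply (simp_all add: mem_T is_chamber_def hexface_def hunit_def psub_def)
  apply (presburger+)?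
  done

lemma vtx_cref: "fst (snd (cref 1 c)) = fst (snd c)" "fst (snd (cref 2 c)) = fst (snd c)"
   "fst (snd (cref (Suc 0) c)) = fst (snd c)"
  by (cases c; simp add: cref_def)+
lemma fc_cref: "fst (cref 0 c) = fst c" "fst (cref 1 c) = fst c" "fst (cref (Suc 0) c) = fst c"
  by (cases c; simp add: cref_def)+

lemma cid_V: "cref 1 (cref 2 (cref 1 (cref 2 (cref 1 (cref 2 c))))) = c"
  by (cases c) (simp add: cref_def padd_def psub_def algebra_simps)
lemma cid_F: "cref 0 (cref 1 (cref 0 (cref 1 (cref 0 (cref 1 (cref 0 (cref 1 (cref 0 (cref 1 (cref 0 (cref 1 c))))))))))) = c"
  by (cases c) (simp add: cref_def padd_def psub_def algebra_simps)

lemma cne: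
  assumes "is_chamber c"
  shows "cref 1 (cref 2 c) \<noteq> c" "cref 0 (cref 1 (cref 0 (cref 1 c))) \<noteq> c"
    "cref 0 (cref 1 (cref 0 (cref 1 (cref 0 (cref 1 c))))) \<noteq> c"
  using assms by (cases rule: chamber_cases; simp add: cref_def padd_def psub_def)+

lemma Vint:
  assumes l: "l \<ge> 1" and m: "is_map P" and f: "f \<in> flags P" and c: "c \<in> gc_tri l 0"
    and v: "fst (snd c) = (x,y)" and h: "y \<ge> 1" "x - y \<ge> 1" "x + y \<le> int l - 1"
  shows "vreg (GC l 0 P) (f,c)"
proof -
  have ch: "is_chamber c" using c by (simp add: gc_tri_def)
  have R: "rf (GC l 0 P) i (f, c') = (f, cref i c')"
    if "i = 1 \<or> i = 2" "is_chamber c'" "fst (snd c') = (x,y)" for i c'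
  proof -
    have "fst (snd (cref i c')) = (x,y)" using that(1) vtx_cref that(3) by (elim disjE) simp_all
    then have "cref i c' \<in> gc_tri l 0"
      using vint_T[OF l cref_chamber[OF that(2)] _ h] by blast
    then show ?thesis by (simp add: GC_rf)
  qed
  have R1: "rf (GC l 0 P) 1 (f, c') = (f, cref 1 c')" "rf (GC l 0 P) (Suc 0) (f, c') = (f, cref 1 c')"
    and R2: "rf (GC l 0 P) 2 (f, c') = (f, cref 2 c')"
    if "is_chamber c'" "fst (snd c') = (x,y)" for c' using R[of 1 c'] R[of 2 c'] that by auto
  show ?thesis unfolding vreg_def
    using ch v by (simp add: R1 R2 cref_chamber vtx_cref cid_V cne cid_V[unfolded One_nat_def] cne[unfolded One_nat_def])
qed

lemma Fint:
  assumes l: "l \<ge> 1" and m: "is_map P" and f: "f \<in> flags P" and c: "c \<in> gc_tri l 0"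
    and v: "fst c = (x,y)" and h: "y \<ge> 1" "x - y \<ge> 3" "x + y \<le> int l - 1"
  shows "freg (GC l 0 P) (f,c)"
proof -
  have ch: "is_chamber c" using c by (simp add: gc_tri_def)
  have R: "rf (GC l 0 P) i (f, c') = (f, cref i c')"
    if "i = 0 \<or> i = 1" "is_chamber c'" "fst c' = (x,y)" for i c'
  proof -
    have "fst (cref i c') = (x,y)" using that(1) fc_cref that(3) by (elim disjE) simp_all
    then have "cref i c' \<in> gc_tri l 0"
      using fint_T[OF l cref_chamber[OF that(2)] _ h] by blast
    then show ?thesis by (simp add: GC_rf)
  qed
  have R1: "rf (GC l 0 P) 1 (f, c') = (f, cref 1 c')" "rf (GC l 0 P) (Suc 0) (f, c') = (f, cref 1 c')"
    and R0: "rf (GC l 0 P) 0 (f, c') = (f, cref 0 c')"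
    if "is_chamber c'" "fst c' = (x,y)" for c' using R[of 1 c'] R[of 0 c'] that by auto
  show ?thesis unfolding freg_def
    using ch v by (simp add: R1 R0 cref_chamber fc_cref cid_F cne cid_F[unfolded One_nat_def] cne[unfolded One_nat_def])
qed

lemma vclass: assumes "is_chamber c" "fst (snd c) = (x,y)" shows "(x - y) mod 3 \<noteq> 0"
  using assms(1) apply (cases rule: chamber_cases) using assms(2) apply simp_all apply (presburger+)? done

lemma fclass: assumes "is_chamber c" "fst c = (x,y)" shows "(x - y) mod 3 = 0"
  using assms(1) apply (cases rule: chamber_cases) using assms(2) apply simp_all done

lemma vbounds: "l \<ge> 1 \<Longrightarrow> c \<in> gc_tri l 0 \<Longrightarrow> fst (snd c) = (x,y) \<Longrightarrow> 0 \<le> y \<and> y \<le> x \<and> x + y \<le> int l"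
  by (cases c) (auto simp: mem_T)

lemma fbounds: "l \<ge> 1 \<Longrightarrow> c \<in> gc_tri l 0 \<Longrightarrow> fst c = (x,y) \<Longrightarrow> 0 \<le> y \<and> y \<le> x \<and> x + y \<le> int l"
  by (cases c) (auto simp: mem_T)

lemma v0c:
  assumes l: "l \<ge> 1" and n3: "\<not> 3 dvd l" and c: "c \<in> gc_tri l 0" and v: "fst (snd c) = (int l, 0)"
  shows "c = c0 l"
proof -
  have ch: "is_chamber c" using c by (simp add: gc_tri_def)
  have m: "int l mod 3 = 1 \<or> int l mod 3 = 2" using l3[OF n3] .
  from ch show ?thesis
    apply (cases rule: chamber_cases)
    using c v l m
    apply (simp_all add: mem_T c0_def is_chamber_def hexface_def hunit_def psub_def)
    apply (presburger+)?
    done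
qed

lemma f2c:
  assumes l: "l \<ge> 1" and c: "c \<in> gc_tri l 0" and v: "fst c = (0, 0)"
  shows "c = c2"
proof -
  have ch: "is_chamber c" using c by (simp add: gc_tri_def)
  from ch show ?thesis
    apply (cases rule: chamber_cases)
    using c v l
    apply (simp_all add: mem_T c2_def)
    done
qed

lemma claimV':
  assumes l: "l \<ge> 1" and n3: "\<not> 3 dvd l" and m: "is_map P" and f: "f \<in> flags P"
    and c: "c \<in> gc_tri l 0" and ne: "c \<noteq> c0 l"
  shows "vreg (GC l 0 P) (f,c)"
proof -
  have ch: "is_chamber c" using c by (simp add: gc_tri_def)
  obtain x y where v: "fst (snd c) = (x,y)" by (cases "fst (snd c)")
  have b: "0 \<le> y" "y \<le> x" "x + y \<le> int l" using vbounds[OF l c v] by auto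
  have cl: "(x - y) mod 3 \<noteq> 0" using vclass[OF ch v] .
  have lm: "int l mod 3 \<noteq> 0" using n3 by presburger
  show ?thesis
  proof (cases "y \<ge> 1 \<and> x - y \<ge> 1 \<and> x + y \<le> int l - 1")
    case True then show ?thesis using Vint[OF l m f c v] by blast
  next
    case False
    show ?thesis
    proof (cases "y = 0")
      case y0: True
      have "x \<noteq> int l" using v0c[OF l n3 c] v y0 ne by auto
      then have xl: "x \<le> int l - 1" using b y0 by simp
      have "x mod 3 = 1 \<or> x mod 3 = 2" using cl y0 by presburger
      then show ?thesis
      proof
        assume xm: "x mod 3 = 1"
        define k where "k = x div 3"
        have xk: "x = 3*k+1" using xm k_def by presburger
        show ?thesis using V1a[OF l m f _ _ c, of k] xk xl y0 v b by simp
      next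
        assume xm: "x mod 3 = 2"
        define k where "k = x div 3"
        have xk: "x = 3*k+2" using xm k_def by presburger
        show ?thesis using V1b[OF l m f _ _ c, of k] xk xl y0 v b by simp
      qed
    next
      case y1: False
      have d: "x - y \<ge> 1" using b cl y1 by presburger
      have s: "x + y = int l" using False b y1 d by simp
      have "(x - y) mod 3 = 1 \<or> (x - y) mod 3 = 2" using cl by presburger
      then show ?thesis
      proof
        assume xm: "(x - y) mod 3 = 1"
        define k where "k = (x - y) div 3"
        have xk: "x = y+3*k+1" using xm k_def by presburger
        show ?thesis using V2a[OF l m f _ _ c, of k y] xk s y1 v b d by simp
      next
        assume xm: "(x - y) mod 3 = 2"
        define k where "k = (x - y) div 3"
        have xk: "x = y+3*k+2" using xm k_def by presburger
        show ?thesis using V2b[OF l m f _ _ c, of k y] xk s y1 v b d by simp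
      qed
    qed
  qed
qed

lemma claimF':
  assumes l: "l \<ge> 1" and n3: "\<not> 3 dvd l" and m: "is_map P" and f: "f \<in> flags P"
    and c: "c \<in> gc_tri l 0" and ne: "c \<noteq> c2"
  shows "freg (GC l 0 P) (f,c)"
proof -
  have ch: "is_chamber c" using c by (simp add: gc_tri_def)
  obtain x y where v: "fst c = (x,y)" by (cases "fst c")
  have b: "0 \<le> y" "y \<le> x" "x + y \<le> int l" using fbounds[OF l c v] by auto
  have cl: "(x - y) mod 3 = 0" using fclass[OF ch v] .
  have lm: "int l mod 3 \<noteq> 0" using n3 by presburger
  show ?thesis
  proof (cases "y \<ge> 1 \<and> x - y \<ge> 3 \<and> x + y \<le> int l - 1")
    case True then show ?thesis using Fint[OF l m f c v] by blast
  next
    case False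
    show ?thesis
    proof (cases "x = y")
      case xy: True
      have y1: "y \<ge> 1" using f2c[OF l c] v xy ne b by force
      show ?thesis
      proof (cases "2 * y = int l")
        case True then show ?thesis using F02[OF l m f _ _ c, of y] v xy y1 by simp
      next
        case False then show ?thesis using F0[OF l m f _ _ c, of y] v xy y1 b by simp
      qed
    next
      case nxy: False
      have d: "x - y \<ge> 3" using b cl nxy by presburger
      define k where "k = (x - y) div 3 - 1"
      have xk: "x = y + 3*k+3" using cl k_def by presburger
      show ?thesis
      proof (cases "y = 0")
        case y0: True
        have "x \<noteq> int l" using cl y0 lm by auto
        then have xl: "x \<le> int l - 1" using b y0 by simp
        show ?thesis using F1[OF l m f _ _ c, of k] xk xl y0 v d by simp
      next
        case y1: False
        have s: "x + y = int l" using False b y1 d by simp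
        show ?thesis using F2[OF l m f _ _ c, of k y] xk s y1 v b d by simp
      qed
    qed
  qed
qed

lemma step_sym:
  assumes m: "is_map M" and I: "I \<subseteq> {0,1,2}" and x: "x \<in> flags M" and s: "step_rel M I x y"
  shows "step_rel M I y x \<and> y \<in> flags M"
proof -
  obtain i where i: "i \<in> I" "y = rf M i x" using s unfolding step_rel_def by auto
  have i3: "i < 3" using I i by auto
  have xy: "x = rf M i y" "y \<in> flags M" using map_inv[OF m x i3] map_cl[OF m x i3] i by auto
  have "step_rel M I y x" unfolding step_rel_def using i(1) xy(1) by blast
  then show ?thesis using xy by blast
qed

lemma rt_sym:
  assumes m: "is_map M" and I: "I \<subseteq> {0,1,2}" and r: "(step_rel M I)\<^sup>*\<^sup>* x y" and x: "x \<in> flags M"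
  shows "(step_rel M I)\<^sup>*\<^sup>* y x \<and> y \<in> flags M"
  using r
proof (induction rule: rtranclp_induct)
  case base then show ?case using x by simp
next
  case (step y z)
  have "step_rel M I z y \<and> z \<in> flags M" using step_sym[OF m I _ step.hyps(2)] step.IH by blast
  then show ?case using step.IH by (meson converse_rtranclp_into_rtranclp)
qed

lemma orb_flags: "is_map M \<Longrightarrow> I \<subseteq> {0,1,2} \<Longrightarrow> x \<in> flags M \<Longrightarrow> orb M I x \<subseteq> flags M"
  unfolding orb_def using rt_sym[of M I x] by auto

lemma orb_eq:
  assumes m: "is_map M" and I: "I \<subseteq> {0,1,2}" and x: "x \<in> flags M" and y: "y \<in> orb M I x"
  shows "orb M I y = orb M I x"
proof -
  have xy: "(step_rel M I)\<^sup>*\<^sup>* x y" using y unfolding orb_def by auto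
  have yx: "(step_rel M I)\<^sup>*\<^sup>* y x" using rt_sym[OF m I xy x] by blast
  show ?thesis unfolding orb_def using xy yx by (auto intro: rtranclp_trans)
qed

lemma orbit_count:
  assumes m: "is_map M" and I: "I \<subseteq> {0,1,2}" and k: "\<forall>x\<in>flags M. card (orb M I x) = k"
  shows "k * card (orb M I ` flags M) = card (flags M)"
proof -
  have fin: "finite (flags M)" using m by (simp add: is_map_def)
  have U: "\<Union> (orb M I ` flags M) = flags M"
  proof
    show "\<Union> (orb M I ` flags M) \<subseteq> flags M" using orb_flags[OF m I] by blast
    show "flags M \<subseteq> \<Union> (orb M I ` flags M)" unfolding orb_def by blast
  qed
  have "k * card (orb M I ` flags M) = card (\<Union> (orb M I ` flags M))"
  proof (rule card_partition)
    show "finite (orb M I ` flags M)" using fin by simp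
    show "finite (\<Union> (orb M I ` flags M))" using U fin by simp
    show "\<And>c. c \<in> orb M I ` flags M \<Longrightarrow> card c = k" using k by auto
    show "\<And>c1 c2. c1 \<in> orb M I ` flags M \<Longrightarrow> c2 \<in> orb M I ` flags M \<Longrightarrow> c1 \<noteq> c2 \<Longrightarrow> c1 \<inter> c2 = {}"
    proof -
      fix c1 c2 assume c: "c1 \<in> orb M I ` flags M" "c2 \<in> orb M I ` flags M" "c1 \<noteq> c2"
      then obtain x1 x2 where x: "x1 \<in> flags M" "x2 \<in> flags M" "c1 = orb M I x1" "c2 = orb M I x2" by auto
      show "c1 \<inter> c2 = {}"
      proof (rule ccontr)
        assume "c1 \<inter> c2 \<noteq> {}"
        then obtain z where "z \<in> orb M I x1" "z \<in> orb M I x2" using x by auto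
        then have "orb M I x1 = orb M I x2" using orb_eq[OF m I x(1)] orb_eq[OF m I x(2)] by metis
        then show False using c x by simp
      qed
    qed
  qed
  then show ?thesis using U by simp
qed

lemma dihedral:
  fixes M :: "'b flagmap" and sg :: "'b \<Rightarrow> bool"
  assumes m: "is_map M" and sg: "\<forall>x\<in>flags M. \<forall>i<3. sg (rf M i x) \<noteq> sg x"
    and ab: "a < 3" "b < 3" and x: "x \<in> flags M" and n: "n \<ge> 1"
    and per: "\<And>y. y \<in> flags M \<Longrightarrow> ((\<lambda>z. rf M a (rf M b z))^^n) y = y"
    and nd: "\<And>y d. y \<in> flags M \<Longrightarrow> 0 < d \<Longrightarrow> d < n \<Longrightarrow> ((\<lambda>z. rf M a (rf M b z))^^d) y \<noteq> y"
  shows "card (orb M {a,b} x) = 2 * n"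
proof -
  define \<rho> where "\<rho> = (\<lambda>z. rf M a (rf M b z))"
  have rfl: "\<And>y i. y \<in> flags M \<Longrightarrow> i < 3 \<Longrightarrow> rf M i y \<in> flags M" using map_cl[OF m] by blast
  have inv: "\<And>y i. y \<in> flags M \<Longrightarrow> i < 3 \<Longrightarrow> rf M i (rf M i y) = y" using map_inv[OF m] by blast
  have pf: "(\<rho>^^i) y \<in> flags M" if "y \<in> flags M" for i y
    using that by (induction i) (auto simp: \<rho>_def rfl ab)
  have sgb: "sg (rf M i z) = (\<not> sg z)" if "z \<in> flags M" "i < 3" for z i
    using sg that by auto
  have ps: "sg ((\<rho>^^i) y) = sg y" if "y \<in> flags M" for i y
    using that
  proof (induction i)
    case 0 then show ?case by simp
  next
    case (Suc i)
    have a: "(\<rho>^^i) y \<in> flags M" using pf Suc.prems by blast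
    have b: "rf M b ((\<rho>^^i) y) \<in> flags M" using rfl[OF a ab(2)] .
    have "sg (rf M a (rf M b ((\<rho>^^i) y))) = sg ((\<rho>^^i) y)"
      using sgb[OF a ab(2)] sgb[OF b ab(1)] by simp
    then show ?case using Suc by (simp add: \<rho>_def)
  qed
  obtain n1 where n1: "n = Suc n1" using n by (cases n) auto
  have pn: "(\<rho>^^n) y = y" if "y \<in> flags M" for y using per[OF that] \<rho>_def by simp
  define A where "A = (\<lambda>i. (\<rho>^^i) x) ` {..<n}"
  define B where "B = (\<lambda>i. rf M b ((\<rho>^^i) x)) ` {..<n}"
  have clA: "rf M a y \<in> A \<union> B \<and> rf M b y \<in> A \<union> B" if yA: "y \<in> A" for y
  proof -
    obtain i where i: "i < n" "y = (\<rho>^^i) x" using yA A_def by auto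
    have "rf M b y \<in> B" using i B_def by auto
    moreover have "rf M a y \<in> B"
    proof (cases i)
      case 0
      define z where "z = (\<rho>^^n1) x"
      have zf: "rf M b z \<in> flags M" using rfl[OF pf[OF x] ab(2)] z_def by simp
      have xn: "x = rf M a (rf M b z)" using pn[OF x] n1 z_def by (simp add: \<rho>_def)
      have "rf M a x = rf M a (rf M a (rf M b z))" using arg_cong[OF xn, of "rf M a"] .
      also have "\<dots> = rf M b z" using inv[OF zf ab(1)] .
      finally have "rf M a y = rf M b ((\<rho>^^n1) x)" using i 0 z_def by simp
      then show ?thesis using n1 B_def by auto
    next
      case (Suc j)
      have "rf M a y = rf M a (rf M a (rf M b ((\<rho>^^j) x)))" using i Suc by (simp add: \<rho>_def)
      also have "\<dots> = rf M b ((\<rho>^^j) x)" using inv[OF rfl[OF pf[OF x] ab(2)] ab(1)] .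
      finally show ?thesis using Suc i B_def by auto
    qed
    ultimately show ?thesis by blast
  qed
  have clB: "rf M a y \<in> A \<union> B \<and> rf M b y \<in> A \<union> B" if yB: "y \<in> B" for y
  proof -
    obtain i where i: "i < n" "y = rf M b ((\<rho>^^i) x)" using yB B_def by auto
    have "rf M b y \<in> A" using i A_def inv[OF pf[OF x] ab(2)] by auto
    moreover have "rf M a y \<in> A"
    proof (cases "Suc i < n")
      case True
      have "rf M a y = (\<rho>^^(Suc i)) x" using i by (simp add: \<rho>_def)
      then show ?thesis using True A_def by blast
    next
      case False
      then have si: "Suc i = n" using i by simp
      have "rf M a y = (\<rho>^^(Suc i)) x" using i by (simp add: \<rho>_def)
      also have "\<dots> = x" using si pn[OF x] by simp
      finally have "rf M a y = (\<rho>^^0) x" by simp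
      then show ?thesis using A_def n by force
    qed
    ultimately show ?thesis by blast
  qed
  have sub1: "orb M {a,b} x \<subseteq> A \<union> B"
  proof
    fix z assume "z \<in> orb M {a,b} x"
    then have "(step_rel M {a,b})\<^sup>*\<^sup>* x z" by (simp add: orb_def)
    then show "z \<in> A \<union> B"
    proof (induction rule: rtranclp_induct)
      case base
      have "x = (\<rho>^^0) x" by simp
      then show ?case using A_def n by force
    next
      case (step y z)
      then obtain j where "j \<in> {a,b}" "z = rf M j y" by (auto simp: step_rel_def)
      then show ?case using step.IH clA clB by blast
    qed
  qed
  have rA: "(step_rel M {a,b})\<^sup>*\<^sup>* x ((\<rho>^^i) x)" for i
  proof (induction i)
    case 0 then show ?case by simp
  next
    case (Suc i)
    have "step_rel M {a,b} ((\<rho>^^i) x) (rf M b ((\<rho>^^i) x))" by (simp add: step_rel_def)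
    moreover have "step_rel M {a,b} (rf M b ((\<rho>^^i) x)) ((\<rho>^^(Suc i)) x)" by (simp add: step_rel_def \<rho>_def)
    ultimately show ?case using Suc by (meson rtranclp.rtrancl_into_rtrancl)
  qed
  have sub2: "A \<union> B \<subseteq> orb M {a,b} x"
  proof -
    have "A \<subseteq> orb M {a,b} x" using rA unfolding A_def orb_def by auto
    moreover have "B \<subseteq> orb M {a,b} x"
    proof
      fix z assume "z \<in> B"
      then obtain i where z: "z = rf M b ((\<rho>^^i) x)" using B_def by auto
      have "step_rel M {a,b} ((\<rho>^^i) x) z" using z by (simp add: step_rel_def)
      then show "z \<in> orb M {a,b} x" using rA[of i] unfolding orb_def by (auto intro: rtranclp.rtrancl_into_rtrancl)
    qed
    ultimately show ?thesis by blast
  qed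
  have gen: False if "p < q" "q < n" "(\<rho>^^p) x = (\<rho>^^q) x" for p q
  proof -
    have "(\<rho>^^q) x = (\<rho>^^((q-p)+p)) x" using that(1) by simp
    also have "\<dots> = (\<rho>^^(q-p)) ((\<rho>^^p) x)" by (simp add: funpow_add)
    finally have "(\<rho>^^(q-p)) ((\<rho>^^p) x) = (\<rho>^^p) x" using that(3) by simp
    moreover have "(\<rho>^^(q-p)) ((\<rho>^^p) x) \<noteq> (\<rho>^^p) x"
      using nd[OF pf[OF x], of "q-p"] that unfolding \<rho>_def by simp
    ultimately show False by simp
  qed
  have injA: "inj_on (\<lambda>i. (\<rho>^^i) x) {..<n}"
  proof
    fix i j assume ij: "i \<in> {..<n}" "j \<in> {..<n}" "(\<rho>^^i) x = (\<rho>^^j) x"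
    show "i = j"
    proof (rule ccontr)
      assume ne: "i \<noteq> j"
      then consider "i < j" | "j < i" by linarith
      then show False
      proof cases
        case 1 then show False using gen[of i j] ij by simp
      next
        case 2 then show False using gen[of j i] ij by simp
      qed
    qed
  qed
  have injB: "inj_on (\<lambda>i. rf M b ((\<rho>^^i) x)) {..<n}"
  proof
    fix i j assume ij: "i \<in> {..<n}" "j \<in> {..<n}" "rf M b ((\<rho>^^i) x) = rf M b ((\<rho>^^j) x)"
    have "rf M b (rf M b ((\<rho>^^i) x)) = rf M b (rf M b ((\<rho>^^j) x))" using ij(3) by simp
    then have "(\<rho>^^i) x = (\<rho>^^j) x" using inv[OF pf[OF x] ab(2)] by simp
    then show "i = j" using injA ij by (simp add: inj_on_def)
  qed
  have disj: "A \<inter> B = {}"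
  proof -
    have "sg y = sg x" if yA: "y \<in> A" for y using yA A_def ps[OF x] by auto
    moreover have "sg y \<noteq> sg x" if yB: "y \<in> B" for y
    proof -
      obtain i where yi: "y = rf M b ((\<rho>^^i) x)" using yB B_def by auto
      have "sg y = (\<not> sg ((\<rho>^^i) x))" using yi sgb[OF pf[OF x] ab(2)] by simp
      then show ?thesis using ps[OF x] by simp
    qed
    ultimately show ?thesis by blast
  qed
  have fA: "finite A" "finite B" using A_def B_def by auto
  have "card (A \<union> B) = 2 * n"
    using card_Un_disjoint[OF fA disj] card_image[OF injA] card_image[OF injB] A_def B_def by simp
  moreover have "orb M {a,b} x = A \<union> B" using sub1 sub2 by blast
  ultimately show ?thesis by simp
qed

lemma euler':
  assumes m: "is_map P" and o: "orientable P" and g: "genus P \<noteq> 1"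
  shows "\<exists>f\<in>flags P. \<not> vreg P f \<or> \<not> freg P f"
proof (rule ccontr)
  assume "\<not> ?thesis"
  then have H: "\<And>y. y \<in> flags P \<Longrightarrow> vreg P y \<and> freg P y" by blast
  obtain sg :: "'a \<Rightarrow> bool" where sg: "\<forall>x\<in>flags P. \<forall>i<3. sg (rf P i x) \<noteq> sg x"
    using o unfolding orientable_def by blast
  have inv: "\<And>y i. y \<in> flags P \<Longrightarrow> i < 3 \<Longrightarrow> rf P i (rf P i y) = y" using map_inv[OF m] by blast
  have rfl: "\<And>y i. y \<in> flags P \<Longrightarrow> i < 3 \<Longrightarrow> rf P i y \<in> flags P" using map_cl[OF m] by blast
  have com: "\<And>y. y \<in> flags P \<Longrightarrow> rf P 0 (rf P 2 y) = rf P 2 (rf P 0 y) \<and> rf P 0 (rf P 2 y) \<noteq> y"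
    using m unfolding is_map_def by blast
  have cV: "card (orb P {1,2} y) = 2 * 3" if y: "y \<in> flags P" for y
  proof (rule dihedral[OF m sg _ _ y])
    show "((\<lambda>z. rf P 1 (rf P 2 z))^^3) w = w" if "w \<in> flags P" for w
      using H[OF that] by (simp add: vreg_def numeral_3_eq_3)
    show "((\<lambda>z. rf P 1 (rf P 2 z))^^d) w \<noteq> w" if "w \<in> flags P" "0 < d" "d < 3" for w d
    proof -
      have "d = 1 \<or> d = 2" using that by auto
      moreover have "rf P 1 (rf P 2 w) \<noteq> w" using H[OF that(1)] by (simp add: vreg_def)
      moreover have "rf P 1 (rf P 2 (rf P 1 (rf P 2 w))) \<noteq> w"
      proof
        assume a: "rf P 1 (rf P 2 (rf P 1 (rf P 2 w))) = w"
        have "rf P 1 (rf P 2 (rf P 1 (rf P 2 (rf P 1 (rf P 2 w))))) = w" using H[OF that(1)] by (simp add: vreg_def)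
        then have "rf P 1 (rf P 2 w) = w" using a by simp
        then show False using H[OF that(1)] by (simp add: vreg_def)
      qed
      ultimately show ?thesis by (auto simp: numeral_2_eq_2)
    qed
  qed simp_all
  have cE: "card (orb P {0,2} y) = 2 * 2" if y: "y \<in> flags P" for y
  proof (rule dihedral[OF m sg _ _ y])
    show "((\<lambda>z. rf P 0 (rf P 2 z))^^2) w = w" if w: "w \<in> flags P" for w
    proof -
      have w2: "rf P 2 w \<in> flags P" using rfl[OF w] by simp
      have "rf P 0 (rf P 2 (rf P 0 (rf P 2 w))) = rf P 0 (rf P 0 (rf P 2 (rf P 2 w)))"
        using com[OF w2] by simp
      also have "\<dots> = w" using inv[OF w2] inv[OF w] by simp
      finally show ?thesis by (simp add: numeral_2_eq_2)
    qed
    show "((\<lambda>z. rf P 0 (rf P 2 z))^^d) w \<noteq> w" if "w \<in> flags P" "0 < d" "d < 2" for w d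
    proof -
      have "d = 1" using that by auto
      then show ?thesis using conjunct2[OF com[OF that(1)]] by simp
    qed
  qed simp_all
  have cF: "card (orb P {0,1} y) = 2 * 6" if y: "y \<in> flags P" for y
  proof (rule dihedral[OF m sg _ _ y])
    show "((\<lambda>z. rf P 0 (rf P 1 z))^^6) w = w" if "w \<in> flags P" for w
      using H[OF that] by (simp add: freg_def eval_nat_numeral)
    show "((\<lambda>z. rf P 0 (rf P 1 z))^^d) w \<noteq> w" if "w \<in> flags P" "0 < d" "d < 6" for w d
    proof -
      define r where "r = (\<lambda>z. rf P 0 (rf P 1 z))"
      have h6: "r (r (r (r (r (r w))))) = w" and h2: "r (r w) \<noteq> w" and h3: "r (r (r w)) \<noteq> w"
        using H[OF that(1)] by (simp_all add: freg_def r_def)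
      have h1: "r w \<noteq> w" using h2 by auto
      have h4: "r (r (r (r w))) \<noteq> w"
      proof
        assume a: "r (r (r (r w))) = w"
        then have "r (r (r (r (r (r w))))) = r (r w)" by simp
        then show False using h6 h2 by simp
      qed
      have h5: "r (r (r (r (r w)))) \<noteq> w"
      proof
        assume a: "r (r (r (r (r w)))) = w"
        then have "r (r (r (r (r (r w))))) = r w" by simp
        then show False using h6 h1 by simp
      qed
      have "d = 1 \<or> d = 2 \<or> d = 3 \<or> d = 4 \<or> d = 5" using that by auto
      then show ?thesis using h1 h2 h3 h4 h5 unfolding r_def[symmetric] by (auto simp: eval_nat_numeral)
    qed
  qed simp_all
  define N where "N = card (flags P)"
  have V: "6 * card (verts P) = N" using orbit_count[OF m _ , of "{1,2}" 6] cV unfolding verts_def N_def by simp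
  have E: "4 * card (edges P) = N" using orbit_count[OF m _ , of "{0,2}" 4] cE unfolding edges_def N_def by simp
  have F: "12 * card (faces P) = N" using orbit_count[OF m _ , of "{0,1}" 12] cF unfolding faces_def N_def by simp
  have "euler_char P = 0" unfolding euler_char_def using V E F by linarith
  then have "genus P = 1" by (simp add: genus_def)
  then show False using g by simp
qed

lemma T_conn:
  assumes l: "l \<ge> 1"
    and cl: "\<And>c i. (g,c) \<in> S \<Longrightarrow> c \<in> gc_tri l 0 \<Longrightarrow> i < 3 \<Longrightarrow> cref i c \<in> gc_tri l 0 \<Longrightarrow> (g, cref i c) \<in> S"
    and c: "c \<in> gc_tri l 0"
  shows "(g,c) \<in> S \<longleftrightarrow> (g,c2) \<in> S"
  using c
proof (induction "nat (mu c)" arbitrary: c rule: less_induct)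
  case less
  show ?case
  proof (cases "c = c2")
    case True then show ?thesis by simp
  next
    case False
    obtain i where i: "i < 3" "cref i c \<in> gc_tri l 0" "mu (cref i c) < mu c"
      using desc[OF l less.prems False] by blast
    have "nat (mu (cref i c)) < nat (mu c)" using i(3) mu_nonneg[of "cref i c"] by simp
    then have ih: "(g, cref i c) \<in> S \<longleftrightarrow> (g,c2) \<in> S" using less.hyps i(2) by blast
    have "(g,c) \<in> S \<longleftrightarrow> (g, cref i c) \<in> S"
      using cl[of c i] cl[of "cref i c" i] i less.prems by (auto simp: cref_inv)
    then show ?thesis using ih by simp
  qed
qed

lemma rf_inj: "is_map P \<Longrightarrow> a \<in> flags P \<Longrightarrow> b \<in> flags P \<Longrightarrow> i < 3 \<Longrightarrow> rf P i a = rf P i b \<longleftrightarrow> a = b"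
  by (metis map_inv)

lemma label_pres:
  assumes l: "l \<ge> 1" and n3: "\<not> 3 dvd l" and map: "is_map P" and ori: "orientable P" and g: "genus P \<noteq> 1"
    and a: "\<psi> \<in> Aut (GC l 0 P)"
  shows "\<forall>x \<in> flags (GC l 0 P). snd (\<psi> x) = snd x"
proof -
  let ?G = "GC l 0 P" let ?T = "gc_tri l 0"
  have cl: "\<And>x i. x \<in> flags ?G \<Longrightarrow> i < 3 \<Longrightarrow> rf ?G i x \<in> flags ?G" using G_cl map by blast
  define S where "S = {x \<in> flags ?G. snd (\<psi> x) = snd x}"
  have Scl: "rf ?G i x \<in> S" if x: "x \<in> S" "i < 3" for x i
  proof -
    obtain f c where xf: "x = (f,c)" by (cases x)
    have fx: "x \<in> flags ?G" and sx: "snd (\<psi> x) = c" using x S_def xf by auto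
    obtain f' where px: "\<psi> (f,c) = (f', c)" using sx xf by (cases "\<psi> x") auto
    have "\<psi> (rf ?G i x) = rf ?G i (\<psi> x)" using aut_comm[OF a fx x(2)] .
    then have "snd (\<psi> (rf ?G i x)) = snd (rf ?G i x)" unfolding xf by (simp add: px GC_rf)
    then show "rf ?G i x \<in> S" using cl[OF fx x(2)] S_def by simp
  qed
  have Sin: "(g, cref i c) \<in> S" if "(g,c) \<in> S" "c \<in> ?T" "i < 3" "cref i c \<in> ?T" for g c i
    using Scl[OF that(1) that(3)] that(4) by (simp add: GC_rf)
  have TC: "(g,c) \<in> S \<longleftrightarrow> (g,c2) \<in> S" if "c \<in> ?T" for g c
    using T_conn[OF l _ that, of g S] Sin by blast
  have c0T: "c0 l \<in> ?T" and c2T: "c2 \<in> ?T" using c0_T[OF l n3] c2_T[OF l] by auto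
  note c0r = c0_r[OF l n3] and c2r = c2_r[OF l]
  obtain f0 where f0: "f0 \<in> flags P" "\<not> vreg P f0 \<or> \<not> freg P f0" using euler'[OF map ori g] by blast
  have "\<exists>x0. x0 \<in> S"
  proof (cases "vreg P f0")
    case False
    define g0 where "g0 = (if int l mod 3 = 1 then f0 else rf P 2 f0)"
    have g0f: "g0 \<in> flags P" using f0 map_cl[OF map] g0_def by auto
    have x0f: "(g0, c0 l) \<in> flags ?G" using g0f c0T by (simp add: G_flags)
    have "vreg ?G (g0, c0 l) = vreg P f0"
    proof (cases "int l mod 3 = 1")
      case True
      then show ?thesis using c0r by (simp add: vreg_def g0_def GC_rf)
    next
      case False
      then show ?thesis using c0r f0(1)
        by (simp add: vreg_def g0_def GC_rf rf_inj map map_cl)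
    qed
    then have "\<not> vreg ?G (\<psi> (g0, c0 l))" using reg_aut(1)[OF cl a x0f] False by simp
    moreover obtain f' c' where pc: "\<psi> (g0, c0 l) = (f', c')" by (cases "\<psi> (g0, c0 l)")
    moreover have "(f', c') \<in> flags ?G" using aut_in[OF a x0f] pc by simp
    ultimately have "c' = c0 l" using claimV'[OF l n3 map, of f' c'] by (auto simp: G_flags)
    then have "(g0, c0 l) \<in> S" using x0f pc S_def by simp
    then show ?thesis by blast
  next
    case True
    then have nf: "\<not> freg P f0" using f0 by simp
    have x0f: "(f0, c2) \<in> flags ?G" using f0 c2T by (simp add: G_flags)
    have "freg ?G (f0, c2) = freg P f0" using c2r by (simp add: freg_def GC_rf)
    then have "\<not> freg ?G (\<psi> (f0, c2))" using reg_aut(2)[OF cl a x0f] nf by simp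
    moreover obtain f' c' where pc: "\<psi> (f0, c2) = (f', c')" by (cases "\<psi> (f0, c2)")
    moreover have "(f', c') \<in> flags ?G" using aut_in[OF a x0f] pc by simp
    ultimately have "c' = c2" using claimF'[OF l n3 map, of f' c'] by (auto simp: G_flags)
    then have "(f0, c2) \<in> S" using x0f pc S_def by simp
    then show ?thesis by blast
  qed
  then obtain g0 c' where x0: "(g0, c') \<in> S" by auto
  then have "c' \<in> ?T" "g0 \<in> flags P" using S_def by (auto simp: G_flags)
  then have s0: "(g0, c2) \<in> S" using TC x0 by blast
  have pstep: "(rf P j g, c2) \<in> S" if "(g, c2) \<in> S" "j \<in> {0,1,2}" for g j
  proof -
    have "j = 0 \<or> j = 1 \<or> j = 2" using that(2) by auto
    then show ?thesis
    proof (elim disjE)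
      assume "j = 0" then show ?thesis using Scl[OF that(1), of 0] c2r by (simp add: GC_rf)
    next
      assume "j = 1" then show ?thesis using Scl[OF that(1), of 1] c2r by (simp add: GC_rf)
    next
      assume j: "j = 2"
      define s where "s = (if int l mod 3 = 1 then 2 else (1::nat))"
      have "(g, c0 l) \<in> S" using TC[OF c0T] that(1) by simp
      then have "rf ?G s (g, c0 l) \<in> S" using Scl s_def by simp
      moreover have "rf ?G s (g, c0 l) = (rf P 2 g, c0 l)" using c0r s_def by (simp add: GC_rf)
      ultimately show ?thesis using TC[OF c0T] j by simp
    qed
  qed
  have allc2: "(g, c2) \<in> S" if "g \<in> flags P" for g
  proof -
    have "(step_rel P {0,1,2})\<^sup>*\<^sup>* g0 g" using map \<open>g0 \<in> flags P\<close> that unfolding is_map_def by blast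
    then show ?thesis
    proof (induction rule: rtranclp_induct)
      case base then show ?case using s0 .
    next
      case (step y z)
      then obtain j where "j \<in> {0,1,2}" "z = rf P j y" unfolding step_rel_def by blast
      then show ?case using pstep[OF step.IH] by simp
    qed
  qed
  show ?thesis
  proof
    fix x assume x: "x \<in> flags ?G"
    obtain f c where xf: "x = (f,c)" by (cases x)
    have "f \<in> flags P" "c \<in> ?T" using x xf by (auto simp: G_flags)
    then have "(f,c) \<in> S" using TC allc2 by blast
    then show "snd (\<psi> x) = snd x" using S_def xf by simp
  qed
qed

definition liftA :: "nat \<Rightarrow> 'a flagmap \<Rightarrow> ('a \<Rightarrow> 'a) \<Rightarrow> ('a \<times> chamber \<Rightarrow> 'a \<times> chamber)" where
  "liftA l P \<phi> = (\<lambda>x. if x \<in> flags (GC l 0 P) then (\<phi> (fst x), snd x) else x)"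

lemma lift_in:
  assumes map: "is_map P" and a: "\<phi> \<in> Aut P"
  shows "liftA l P \<phi> \<in> Aut (GC l 0 P)"
proof -
  let ?G = "GC l 0 P" let ?T = "gc_tri l 0"
  have bij: "bij_betw \<phi> (flags P) (flags P)" and com: "\<And>i x. i < 3 \<Longrightarrow> x \<in> flags P \<Longrightarrow> \<phi> (rf P i x) = rf P i (\<phi> x)"
    using a by (auto simp: Aut_def)
  have inj: "inj_on (liftA l P \<phi>) (flags ?G)"
    using bij by (auto simp: inj_on_def liftA_def G_flags bij_betw_def)
  have im: "liftA l P \<phi> ` flags ?G = flags ?G"
  proof
    show "liftA l P \<phi> ` flags ?G \<subseteq> flags ?G" using bij by (auto simp: liftA_def G_flags bij_betw_def)
    show "flags ?G \<subseteq> liftA l P \<phi> ` flags ?G"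
    proof
      fix x assume x: "x \<in> flags ?G"
      obtain f c where xf: "x = (f,c)" by (cases x)
      have "f \<in> \<phi> ` flags P" using bij x xf by (auto simp: bij_betw_def G_flags)
      then obtain g where g: "g \<in> flags P" "f = \<phi> g" by auto
      then have "liftA l P \<phi> (g,c) = x" "(g,c) \<in> flags ?G" using x xf by (auto simp: liftA_def G_flags)
      then show "x \<in> liftA l P \<phi> ` flags ?G" by force
    qed
  qed
  have cm: "liftA l P \<phi> (rf ?G i x) = rf ?G i (liftA l P \<phi> x)" if "i < 3" "x \<in> flags ?G" for i x
  proof -
    obtain f c where xf: "x = (f,c)" by (cases x)
    have f: "f \<in> flags P" "c \<in> ?T" using that xf by (auto simp: G_flags)
    have "rf ?G i x \<in> flags ?G" using G_cl[OF map that(2) that(1)] .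
    then show ?thesis using that f com[OF side_lt3 f(1)] unfolding xf
      by (auto simp: liftA_def GC_rf G_flags)
  qed
  show ?thesis unfolding Aut_def using inj im cm by (auto simp: bij_betw_def liftA_def)
qed

lemma lift_inj:
  assumes "c2 \<in> gc_tri l 0"
  shows "inj_on (liftA l P) (Aut P)"
proof
  fix \<phi> \<phi>' assume a: "\<phi> \<in> Aut P" "\<phi>' \<in> Aut P" and e: "liftA l P \<phi> = liftA l P \<phi>'"
  show "\<phi> = \<phi>'"
  proof
    fix f show "\<phi> f = \<phi>' f"
    proof (cases "f \<in> flags P")
      case True
      have "liftA l P \<phi> (f, c2) = liftA l P \<phi>' (f, c2)" using e by simp
      then show ?thesis using True assms by (simp add: liftA_def G_flags)
    next
      case False then show ?thesis using a by (simp add: Aut_def)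
    qed
  qed
qed

lemma aut_lift:
  assumes l: "l \<ge> 1" and n3: "\<not> 3 dvd l" and map: "is_map P" and ori: "orientable P" and g: "genus P \<noteq> 1"
    and a: "\<psi> \<in> Aut (GC l 0 P)"
  shows "\<exists>\<phi>\<in>Aut P. \<psi> = liftA l P \<phi>"
proof -
  let ?G = "GC l 0 P" let ?T = "gc_tri l 0"
  have lp: "\<forall>x \<in> flags ?G. snd (\<psi> x) = snd x" using label_pres[OF assms] .
  have c0T: "c0 l \<in> ?T" and c2T: "c2 \<in> ?T" using c0_T[OF l n3] c2_T[OF l] by auto
  note c0r = c0_r[OF l n3] and c2r = c2_r[OF l]
  define \<pi> where "\<pi> f = (if f \<in> flags P then fst (\<psi> (f, c2)) else f)" for f
  define S where "S = {x \<in> flags ?G. \<psi> x = (\<pi> (fst x), snd x)}"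
  have Sin: "(g, cref i c) \<in> S" if "(g,c) \<in> S" "c \<in> ?T" "i < 3" "cref i c \<in> ?T" for g c i
  proof -
    have gc: "(g,c) \<in> flags ?G" "\<psi> (g,c) = (\<pi> g, c)" using that(1) S_def by auto
    have "\<psi> (rf ?G i (g,c)) = rf ?G i (\<psi> (g,c))" using aut_comm[OF a gc(1) that(3)] .
    then have "\<psi> (g, cref i c) = (\<pi> g, cref i c)" using gc(2) that(4) by (simp add: GC_rf)
    moreover have "(g, cref i c) \<in> flags ?G" using gc(1) that(4) by (simp add: G_flags)
    ultimately show ?thesis using S_def by simp
  qed
  have TC: "(g,c) \<in> S \<longleftrightarrow> (g,c2) \<in> S" if "c \<in> ?T" for g c
    using T_conn[OF l _ that, of g S] Sin by blast
  have inS: "(f,c) \<in> S" if "f \<in> flags P" "c \<in> ?T" for f c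
  proof -
    have fc: "(f,c2) \<in> flags ?G" using that c2T by (simp add: G_flags)
    then have "snd (\<psi> (f,c2)) = c2" using lp by auto
    then have "\<psi> (f,c2) = (\<pi> f, c2)" using that(1) \<pi>_def by (cases "\<psi> (f,c2)") auto
    then have "(f,c2) \<in> S" using fc S_def by simp
    then show ?thesis using TC[OF that(2)] by simp
  qed
  have psi: "\<psi> (f,c) = (\<pi> f, c)" if "f \<in> flags P" "c \<in> ?T" for f c
    using inS[OF that] S_def by simp
  have pin: "\<pi> f \<in> flags P" if "f \<in> flags P" for f
  proof -
    have "(f,c2) \<in> flags ?G" using that c2T by (simp add: G_flags)
    then have "\<psi> (f,c2) \<in> flags ?G" using aut_in[OF a] by blast
    then show ?thesis using psi[OF that c2T] by (simp add: G_flags)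
  qed
  have pcom: "\<pi> (rf P i f) = rf P i (\<pi> f)" if "i < 3" "f \<in> flags P" for i f
  proof -
    have "i = 0 \<or> i = 1 \<or> i = 2" using that(1) by auto
    moreover have rff: "rf P i f \<in> flags P" using map_cl[OF map that(2) that(1)] .
    moreover have fc2: "(f,c2) \<in> flags ?G" "(f, c0 l) \<in> flags ?G" using that c2T c0T by (auto simp: G_flags)
    ultimately show ?thesis
    proof (elim disjE)
      assume i: "i = 0"
      have "\<psi> (rf ?G 0 (f,c2)) = rf ?G 0 (\<psi> (f,c2))" using aut_comm[OF a fc2(1)] by simp
      then show ?thesis using i c2r psi[OF that(2) c2T] psi[OF rff c2T] by (simp add: GC_rf)
    next
      assume i: "i = 1"
      have "\<psi> (rf ?G 1 (f,c2)) = rf ?G 1 (\<psi> (f,c2))" using aut_comm[OF a fc2(1)] by simp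
      then show ?thesis using i c2r psi[OF that(2) c2T] psi[OF rff c2T] by (simp add: GC_rf)
    next
      assume i: "i = 2"
      define s where "s = (if int l mod 3 = 1 then 2 else (1::nat))"
      have "\<psi> (rf ?G s (f,c0 l)) = rf ?G s (\<psi> (f,c0 l))" using aut_comm[OF a fc2(2)] s_def by simp
      moreover have "\<And>g. rf ?G s (g, c0 l) = (rf P 2 g, c0 l)" using c0r s_def by (simp add: GC_rf)
      ultimately show ?thesis using i psi[OF that(2) c0T] psi[OF rff c0T] by simp
    qed
  qed
  have pinj: "inj_on \<pi> (flags P)"
  proof
    fix f g assume fg: "f \<in> flags P" "g \<in> flags P" "\<pi> f = \<pi> g"
    then have "\<psi> (f,c2) = \<psi> (g,c2)" using psi c2T by simp
    moreover have "(f,c2) \<in> flags ?G" "(g,c2) \<in> flags ?G" using fg c2T by (auto simp: G_flags)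
    ultimately show "f = g" using aut_inj[OF a] by blast
  qed
  have fin: "finite (flags P)" using map by (simp add: is_map_def)
  have "\<pi> ` flags P = flags P" using endo_inj_surj[OF fin _ pinj] pin by blast
  then have pbij: "bij_betw \<pi> (flags P) (flags P)" using pinj by (simp add: bij_betw_def)
  have pA: "\<pi> \<in> Aut P" unfolding Aut_def using pbij pcom \<pi>_def by auto
  have "\<psi> = liftA l P \<pi>"
  proof
    fix x show "\<psi> x = liftA l P \<pi> x"
    proof (cases "x \<in> flags ?G")
      case True
      then obtain f c where "x = (f,c)" "f \<in> flags P" "c \<in> ?T" by (cases x) (auto simp: G_flags)
      then show ?thesis using psi True by (simp add: liftA_def)
    next
      case False
      have "\<psi> x = x" using a False unfolding Aut_def by blast
      then show ?thesis using False by (simp add: liftA_def)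
    qed
  qed
  then show ?thesis using pA by blast
qed

theorem lemma10:
  fixes P :: "'a flagmap" and l :: nat
  assumes "polyhedral P"
    and "genus P \<noteq> 1"
    and "l \<ge> 1"
    and "\<not> 3 dvd l"
  shows "card (Aut (GC l 0 P)) = card (Aut P)"
proof -
  have map: "is_map P" and ori: "orientable P" using assms(1) by (auto simp: polyhedral_def)
  have "bij_betw (liftA l P) (Aut P) (Aut (GC l 0 P))"
    unfolding bij_betw_def
  proof
    show "inj_on (liftA l P) (Aut P)" using lift_inj c2_T[OF assms(3)] by blast
    show "liftA l P ` Aut P = Aut (GC l 0 P)"
      using lift_in[OF map] aut_lift[OF assms(3) assms(4) map ori assms(2)] by blast
  qed
  then show ?thesis by (simp add: bij_betw_same_card)
qed

end
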